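(* Let $\xi=e^{i\pi/5}$, $\tau=\frac{1+\sqrt5}{2}$, $L(n)=\{\sum_{j=0}^9 n_j\xi^j: n_j\in\mathbb{N}_0,\ \sum_j n_j\le n\}\cap\mathbb{R}$ for $n\in\mathbb{N}$, $x\mapsto x'$ the automorphism $a+b\sqrt5\mapsto a-b\sqrt5$ of $\mathbb{Q}[\sqrt5]$, and $\Sigma([-n,n])=\{x\in\mathbb{Z}+\mathbb{Z}\tau: x'\in[-n,n]\}$. Then the minimal distance between distinct points of $L(n)$ is greater than or equal to the minimal distance between distinct points of $\Sigma([-n,n])$.
   Context: The minimal distance of a set $S\subset\mathbb{R}$ is $\inf\{|x-y|: x,y\in S,\ x\neq y\}$. *)

theory Defs
  imports Complex_Main
begin

definition xi :: complex where "xi = cis (pi / 5)"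

definition tau :: real where "tau = (1 + sqrt 5) / 2"

definition conj5 :: "real \<Rightarrow> real" where
  "conj5 x = (THE y. \<exists>a b :: rat. x = of_rat a + of_rat b * sqrt 5 \<and> y = of_rat a - of_rat b * sqrt 5)"

definition L :: "nat \<Rightarrow> real set" where
  "L n = {x. \<exists>c :: nat \<Rightarrow> nat. (\<Sum>j<10. c j) \<le> n \<and>
              complex_of_real x = (\<Sum>j<10. of_nat (c j) * xi ^ j)}"

definition Sigma_win :: "nat \<Rightarrow> real set" where
  "Sigma_win n = {x. (\<exists>a b :: int. x = of_int a + of_int b * tau) \<and>
                     conj5 x \<in> {- real n .. real n}}"

definition min_dist :: "real set \<Rightarrow> real" where
  "min_dist S = Inf {\<bar>x - y\<bar> | x y. x \<in> S \<and> y \<in> S \<and> x \<noteq> y}"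

end

theory Submission imports Defs "HOL-Computational_Algebra.Polynomial" begin

lemma sqrt5_irr: "sqrt 5 \<notin> \<rat>"
proof
  assume r: "sqrt 5 \<in> \<rat>"
  have "algebraic_int (5::real)" by (metis algebraic_int_numeral)
  hence "algebraic_int (sqrt 5)" by (rule algebraic_int_sqrt)
  hence "sqrt 5 \<in> \<int>" using r by (rule rational_algebraic_int_is_int)
  then obtain k :: int where k: "sqrt 5 = of_int k" by (auto elim: Ints_cases)
  have "2 < sqrt 5" by (simp add: real_less_rsqrt)
  moreover have "sqrt 5 < 3" by (simp add: real_sqrt_less_iff real_less_lsqrt)
  ultimately show False using k by simp
qed

lemma rat_indep:
  assumes "a \<in> \<rat>" "b \<in> \<rat>" "a + b * sqrt 5 = 0"
  shows "a = 0 \<and> b = 0"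
proof (cases "b = 0")
  case True thus ?thesis using assms by simp
next
  case False
  hence "sqrt 5 = - a / b" using assms(3) by (simp add: field_simps)
  hence "sqrt 5 \<in> \<rat>" using assms(1,2) by simp
  thus ?thesis using sqrt5_irr by simp
qed

lemma conj5_eq: "conj5 (of_rat a + of_rat b * sqrt 5) = of_rat a - of_rat b * sqrt 5"
  unfolding conj5_def
proof (rule the_equality)
  show "\<exists>a' b'. of_rat a + of_rat b * sqrt 5 = of_rat a' + of_rat b' * sqrt 5 \<and>
        of_rat a - of_rat b * sqrt 5 = of_rat a' - of_rat b' * sqrt 5" by blast
next
  fix y assume "\<exists>a' b' :: rat. of_rat a + of_rat b * sqrt 5 = of_rat a' + of_rat b' * sqrt 5 \<and>
        y = of_rat a' - of_rat b' * sqrt 5"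
  then obtain a' b' :: rat where e: "of_rat a + of_rat b * sqrt 5 = of_rat a' + of_rat b' * sqrt 5"
     and y: "y = of_rat a' - of_rat b' * sqrt 5" by blast
  have "of_rat (a - a') + of_rat (b - b') * sqrt 5 = (0::real)"
    using e by (simp add: of_rat_diff algebra_simps)
  hence "of_rat (a - a') = (0::real) \<and> of_rat (b - b') = (0::real)"
    by (intro rat_indep) auto
  hence "a = a'" "b = b'" by auto
  thus "y = of_rat a - of_rat b * sqrt 5" using y by simp
qed

lemma cos_pm: "cos (pi - x) = - cos x" "sin (pi - x) = sin x" "cos (pi + x) = - cos x" "sin (pi + x) = - sin x"
  "cos (2*pi - x) = cos x" "sin (2*pi - x) = - sin x"
  by (simp_all add: cos_diff sin_diff cos_add sin_add)

lemma cos36: "cos (pi / 5) = (1 + sqrt 5) / 4"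
proof -
  define c where "c = cos (pi / 5)"
  have "cos (3 * (pi / 5)) = 4 * c ^ 3 - 3 * c" unfolding c_def by (rule cos_treble_cos)
  moreover have "cos (3 * (pi / 5)) = - cos (2 * (pi / 5))"
  proof -
    have "3 * (pi / 5) = pi - 2 * (pi / 5)" by simp
    thus ?thesis by (simp only: cos_pm)
  qed
  moreover have "cos (2 * (pi / 5)) = 2 * c ^ 2 - 1" unfolding c_def by (rule cos_double_cos)
  ultimately have eq: "(c + 1) * (4 * c ^ 2 - 2 * c - 1) = 0"
    by (simp add: algebra_simps power2_eq_square power3_eq_cube) 
  have "cos (pi / 3) < cos (pi / 5)" by (rule cos_monotone_0_pi) auto
  hence c2: "c > 1/2" unfolding c_def by (simp add: cos_60)
  hence "4 * c ^ 2 - 2 * c - 1 = 0" using eq by simp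
  hence "(4 * c - 1) ^ 2 = 5" by (simp add: algebra_simps power2_eq_square)
  moreover have "4 * c - 1 > 0" using c2 by simp
  ultimately have "sqrt 5 = 4 * c - 1" by (metis real_sqrt_abs abs_of_pos)
  thus ?thesis unfolding c_def by simp
qed


lemma cos72: "cos (2 * pi / 5) = (sqrt 5 - 1) / 4"
proof -
  have "cos (2 * (pi / 5)) = 2 * cos (pi/5) ^ 2 - 1" by (rule cos_double_cos)
  also have "\<dots> = (sqrt 5 - 1) / 4" unfolding cos36
    by (simp add: power2_eq_square algebra_simps)
  finally show ?thesis by simp
qed

lemma sin72: "sin (2 * pi / 5) = 2 * sin (pi / 5) * cos (pi / 5)"
  using sin_double[of "pi/5"] by simp

lemma sum10: "(\<Sum>j<(10::nat). f j) = f 0 + f 1 + f 2 + f 3 + f 4 + f 5 + f 6 + f 7 + f 8 + (f 9 :: 'a::comm_monoid_add)"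
  by (simp add: eval_nat_numeral add_ac)

lemma tab:
  "cos (real 0 * pi / 5) = 1" "sin (real 0 * pi / 5) = 0"
  "cos (real 1 * pi / 5) = cos (pi/5)" "sin (real 1 * pi / 5) = sin (pi/5)"
  "cos (real 2 * pi / 5) = cos (2*pi/5)" "sin (real 2 * pi / 5) = sin (2*pi/5)"
  "cos (real 3 * pi / 5) = - cos (2*pi/5)" "sin (real 3 * pi / 5) = sin (2*pi/5)"
  "cos (real 4 * pi / 5) = - cos (pi/5)" "sin (real 4 * pi / 5) = sin (pi/5)"
  "cos (real 5 * pi / 5) = - 1" "sin (real 5 * pi / 5) = 0"
  "cos (real 6 * pi / 5) = - cos (pi/5)" "sin (real 6 * pi / 5) = - sin (pi/5)"
  "cos (real 7 * pi / 5) = - cos (2*pi/5)" "sin (real 7 * pi / 5) = - sin (2*pi/5)"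
  "cos (real 8 * pi / 5) = cos (2*pi/5)" "sin (real 8 * pi / 5) = - sin (2*pi/5)"
  "cos (real 9 * pi / 5) = cos (pi/5)" "sin (real 9 * pi / 5) = - sin (pi/5)"
proof -
  have e3: "real 3 * pi / 5 = pi - 2*pi/5" by simp
  have e4: "real 4 * pi / 5 = pi - pi/5" by simp
  have e6: "real 6 * pi / 5 = pi + pi/5" by simp
  have e7: "real 7 * pi / 5 = pi + 2*pi/5" by simp
  have e8: "real 8 * pi / 5 = 2*pi - 2*pi/5" by simp
  have e9: "real 9 * pi / 5 = 2*pi - pi/5" by simp
  show "cos (real 0 * pi / 5) = 1" "sin (real 0 * pi / 5) = 0"
  "cos (real 1 * pi / 5) = cos (pi/5)" "sin (real 1 * pi / 5) = sin (pi/5)"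
  "cos (real 2 * pi / 5) = cos (2*pi/5)" "sin (real 2 * pi / 5) = sin (2*pi/5)"
  "cos (real 5 * pi / 5) = - 1" "sin (real 5 * pi / 5) = 0" by simp_all
  show "cos (real 3 * pi / 5) = - cos (2*pi/5)" "sin (real 3 * pi / 5) = sin (2*pi/5)"
    unfolding e3 by (simp_all only: cos_pm)
  show "cos (real 4 * pi / 5) = - cos (pi/5)" "sin (real 4 * pi / 5) = sin (pi/5)"
    unfolding e4 by (simp_all only: cos_pm)
  show "cos (real 6 * pi / 5) = - cos (pi/5)" "sin (real 6 * pi / 5) = - sin (pi/5)"
    unfolding e6 by (simp_all only: cos_pm)
  show "cos (real 7 * pi / 5) = - cos (2*pi/5)" "sin (real 7 * pi / 5) = - sin (2*pi/5)"
    unfolding e7 by (simp_all only: cos_pm)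
  show "cos (real 8 * pi / 5) = cos (2*pi/5)" "sin (real 8 * pi / 5) = - sin (2*pi/5)"
    unfolding e8 by (simp_all only: cos_pm)
  show "cos (real 9 * pi / 5) = cos (pi/5)" "sin (real 9 * pi / 5) = - sin (pi/5)"
    unfolding e9 by (simp_all only: cos_pm)
qed

lemma L_sub: "L n \<subseteq> Sigma_win n"
proof
  fix x assume "x \<in> L n"
  then obtain c :: "nat \<Rightarrow> nat" where cs: "(\<Sum>j<10. c j) \<le> n"
    and cx: "complex_of_real x = (\<Sum>j<10. of_nat (c j) * xi ^ j)" unfolding L_def by blast
  have xp: "xi ^ j = cis (real j * pi / 5)" for j
    unfolding xi_def DeMoivre by simp
  have "x = Re (complex_of_real x)" by simp
  also have "\<dots> = (\<Sum>j<10. real (c j) * cos (real j * pi / 5))"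
    unfolding cx Re_sum xp by simp
  finally have xs: "x = (\<Sum>j<10. real (c j) * cos (real j * pi / 5))" .
  have "0 = Im (complex_of_real x)" by simp
  also have "\<dots> = (\<Sum>j<10. real (c j) * sin (real j * pi / 5))"
    unfolding cx Im_sum xp by simp
  finally have ys: "0 = (\<Sum>j<10. real (c j) * sin (real j * pi / 5))" .
  define C where "C = cos (pi/5)"
  define S where "S = sin (pi/5)"
  have C: "C = (1 + sqrt 5) / 4" unfolding C_def by (rule cos36)
  have Spos: "S > 0" unfolding S_def by (rule sin_gt_zero) auto
  note t = tab[folded C_def S_def] sin72[folded C_def S_def] cos72
  have xs2: "x = real (c 0) - real (c 5) + (real (c 1) + real (c 9) - real (c 4) - real (c 6)) * C
     + (real (c 2) + real (c 8) - real (c 3) - real (c 7)) * ((sqrt 5 - 1) / 4)"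
    using xs unfolding sum10 t by (simp add: field_simps)
  define P where "P = int (c 1) + int (c 4) - int (c 6) - int (c 9)"
  define Q where "Q = int (c 2) + int (c 3) - int (c 7) - int (c 8)"
  have "0 = S * (of_int P + of_int Q * (2 * C))"
    using ys unfolding sum10 t P_def Q_def by (simp add: algebra_simps)
  hence "of_int P + of_int Q * (2 * C) = 0" using Spos by simp
  hence "(of_int P + of_int Q / 2) + (of_int Q / 2) * sqrt 5 = 0" unfolding C
    by (simp add: algebra_simps add_divide_distrib)
  hence "(of_int P + of_int Q / 2) = (0::real) \<and> (of_int Q / 2) = (0::real)"
    by (intro rat_indep) auto
  hence P0: "P = 0" and Q0: "Q = 0" by auto
  define A where "A = int (c 0) - int (c 5)"
  define B' where "B' = int (c 9) - int (c 4)"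
  define C' where "C' = int (c 8) - int (c 3)"
  have r1: "real (c 1) = real (c 6) + real (c 9) - real (c 4)" using P0 unfolding P_def by linarith
  have r2: "real (c 2) = real (c 7) + real (c 8) - real (c 3)" using Q0 unfolding Q_def by linarith
  have xe: "x = of_int (A - C') + of_int (B' + C') * tau"
    using xs2[unfolded r1 r2] unfolding A_def B'_def C'_def P_def Q_def tau_def C
    by (simp add: algebra_simps add_divide_distrib diff_divide_distrib)
  define a :: rat where "a = of_int (A - C') + of_int (B' + C') / 2"
  define b :: rat where "b = of_int (B' + C') / 2"
  have "x = of_rat a + of_rat b * sqrt 5" unfolding xe a_def b_def tau_def
    by (simp add: of_rat_add of_rat_diff of_rat_divide algebra_simps add_divide_distrib)
  hence cj: "conj5 x = of_rat a - of_rat b * sqrt 5" by (simp add: conj5_eq)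
  define u where "u = (1 - sqrt 5) / 4"
  define v where "v = (- 1 - sqrt 5) / 4"
  have s5: "2 < sqrt 5" "sqrt 5 < 3" by (simp_all add: real_less_rsqrt real_sqrt_less_iff real_less_lsqrt)
  have u: "-1 \<le> u" "u \<le> 1" and v: "-1 \<le> v" "v \<le> 1" using s5 unfolding u_def v_def by auto
  have cj2: "conj5 x = real (c 0) - real (c 5) + (real (c 1) + real (c 9) - real (c 4) - real (c 6)) * u
     + (real (c 2) + real (c 8) - real (c 3) - real (c 7)) * v"
    unfolding r1 r2 cj a_def b_def A_def B'_def C'_def P_def Q_def u_def v_def
    by (simp add: of_rat_add of_rat_diff of_rat_divide algebra_simps add_divide_distrib diff_divide_distrib)
  have bnd: "\<bar>real k * w\<bar> \<le> real k" if "-1 \<le> w" "w \<le> 1" for k :: nat and w :: real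
    using that by (simp add: abs_mult mult_left_le)
  have ns: "real (c 0) + real (c 1) + real (c 2) + real (c 3) + real (c 4) + real (c 5) + real (c 6)
     + real (c 7) + real (c 8) + real (c 9) \<le> real n"
    using cs unfolding sum10 by linarith
  have "\<bar>conj5 x\<bar> \<le> real n"
    unfolding cj2 using ns bnd[OF u, of "c 1"] bnd[OF u, of "c 9"] bnd[OF u, of "c 4"] bnd[OF u, of "c 6"]
      bnd[OF v, of "c 2"] bnd[OF v, of "c 3"] bnd[OF v, of "c 7"] bnd[OF v, of "c 8"]
    by (simp add: algebra_simps)
  moreover have "\<exists>a b :: int. x = of_int a + of_int b * tau" using xe by blast
  ultimately show "x \<in> Sigma_win n" unfolding Sigma_win_def by auto
qed


theorem lemma6p12:
  fixes n :: nat
  assumes "n \<ge> 1"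
  shows "min_dist (L n) \<ge> min_dist (Sigma_win n)"
  unfolding min_dist_def
proof (rule cInf_superset_mono)
  have "0 \<in> L n" unfolding L_def by (rule CollectI, rule exI[of _ "\<lambda>j. 0"]) simp
  moreover have "1 \<in> L n" unfolding L_def
    by (rule CollectI, rule exI[of _ "\<lambda>j. if j = 0 then 1 else 0"]) (use assms in \<open>simp add: sum10\<close>)
  ultimately have "\<bar>1 - 0\<bar> \<in> {\<bar>x - y\<bar> |x y. x \<in> L n \<and> y \<in> L n \<and> x \<noteq> y}" by fastforce
  thus "{\<bar>x - y\<bar> |x y. x \<in> L n \<and> y \<in> L n \<and> x \<noteq> y} \<noteq> {}" by blast
  show "bdd_below {\<bar>x - y\<bar> |x y. x \<in> Sigma_win n \<and> y \<in> Sigma_win n \<and> x \<noteq> y}"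
    by (rule bdd_belowI[of _ 0]) auto
  show "{\<bar>x - y\<bar> |x y. x \<in> L n \<and> y \<in> L n \<and> x \<noteq> y}
    \<subseteq> {\<bar>x - y\<bar> |x y. x \<in> Sigma_win n \<and> y \<in> Sigma_win n \<and> x \<noteq> y}"
    using L_sub by blast
qed

end
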